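(* Let $\mathcal{F}$ satisfy the standard conditions. If $A:\mathbb{N}\to\mathbb{Q}$ is an $\mathcal{F}$-sequence with $A(x)\neq0$ for all $x$, then $1/A$ is an $\mathcal{F}$-sequence.
   Context: $\mathbb{N}=\{0,1,2,\dots\}$. $\mathcal{F}$ is a set of functions $\mathbb{N}^n\to\mathbb{N}$ ($n\ge0$). It satisfies the standard conditions if it contains the zero function $Z(x)=0$, the successor $S(x)=x+1$, all projections $P^n_i(x_1,\dots,x_n)=x_i$, addition, multiplication and modified subtraction $x\dot- y=\max(x-y,0)$, and is closed under composition. An $\mathcal{F}$-sequence is a function $A:\mathbb{N}\to\mathbb{Q}$ of the form $A(x)=\frac{f(x)-g(x)}{h(x)+1}$ with $f,g,h:\mathbb{N}\to\mathbb{N}$ in $\mathcal{F}$. *)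

theory Defs
  imports Complex_Main
begin

text \<open>A class of functions N^n -> N is modelled as an arity-indexed family
  F :: nat => (nat list => nat) set; a function of arity n is a function on
  lists, only its values on lists of length n matter.\<close>

definition memF :: "(nat \<Rightarrow> (nat list \<Rightarrow> nat) set) \<Rightarrow> nat \<Rightarrow> (nat list \<Rightarrow> nat) \<Rightarrow> bool" where
  "memF F n f \<longleftrightarrow> (\<exists>g\<in>F n. \<forall>xs. length xs = n \<longrightarrow> f xs = g xs)"

definition standard_conditions :: "(nat \<Rightarrow> (nat list \<Rightarrow> nat) set) \<Rightarrow> bool" where
  "standard_conditions F \<longleftrightarrow>
     memF F 1 (\<lambda>xs. 0) \<and>
     memF F 1 (\<lambda>xs. xs ! 0 + 1) \<and>
     (\<forall>n i. i < n \<longrightarrow> memF F n (\<lambda>xs. xs ! i)) \<and>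
     memF F 2 (\<lambda>xs. xs ! 0 + xs ! 1) \<and>
     memF F 2 (\<lambda>xs. xs ! 0 * xs ! 1) \<and>
     memF F 2 (\<lambda>xs. xs ! 0 - xs ! 1) \<and>
     (\<forall>m n f gs. memF F m f \<and> length gs = m \<and> (\<forall>g\<in>set gs. memF F n g)
        \<longrightarrow> memF F n (\<lambda>xs. f (map (\<lambda>g. g xs) gs)))"

definition unaryF :: "(nat \<Rightarrow> (nat list \<Rightarrow> nat) set) \<Rightarrow> (nat \<Rightarrow> nat) \<Rightarrow> bool" where
  "unaryF F f \<longleftrightarrow> memF F 1 (\<lambda>xs. f (xs ! 0))"

definition F_sequence :: "(nat \<Rightarrow> (nat list \<Rightarrow> nat) set) \<Rightarrow> (nat \<Rightarrow> rat) \<Rightarrow> bool" where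
  "F_sequence F A \<longleftrightarrow> (\<exists>f g h. unaryF F f \<and> unaryF F g \<and> unaryF F h \<and>
      (\<forall>x. A x = (of_nat (f x) - of_nat (g x)) / (of_nat (h x) + 1)))"

end

theory Submission
  imports Defs
begin

lemma comp2:
  assumes sc: "standard_conditions F" and op: "memF F 2 (\<lambda>xs. p (xs ! 0) (xs ! 1))"
    and f: "unaryF F f" and g: "unaryF F g"
  shows "unaryF F (\<lambda>x. p (f x) (g x))"
proof -
  have "memF F 1 (\<lambda>xs. (\<lambda>ys. p (ys ! 0) (ys ! 1)) (map (\<lambda>k. k xs) [\<lambda>xs. f (xs ! 0), \<lambda>xs. g (xs ! 0)]))"
  proof -
    have C: "\<And>m n f gs. memF F m f \<Longrightarrow> length gs = m \<Longrightarrow> (\<forall>g\<in>set gs. memF F n g)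
        \<Longrightarrow> memF F n (\<lambda>xs. f (map (\<lambda>g. g xs) gs))"
      using sc unfolding standard_conditions_def by blast
    show ?thesis by (rule C[OF op]) (use f g in \<open>auto simp: unaryF_def\<close>)
  qed
  then show ?thesis unfolding unaryF_def by simp
qed

lemma comp1:
  assumes sc: "standard_conditions F" and op: "memF F 1 (\<lambda>xs. p (xs ! 0))"
    and f: "unaryF F f"
  shows "unaryF F (\<lambda>x. p (f x))"
proof -
  have "memF F 1 (\<lambda>xs. (\<lambda>ys. p (ys ! 0)) (map (\<lambda>k. k xs) [\<lambda>xs. f (xs ! 0)]))"
  proof -
    have C: "\<And>m n f gs. memF F m f \<Longrightarrow> length gs = m \<Longrightarrow> (\<forall>g\<in>set gs. memF F n g)
        \<Longrightarrow> memF F n (\<lambda>xs. f (map (\<lambda>g. g xs) gs))"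
      using sc unfolding standard_conditions_def by blast
    show ?thesis by (rule C[OF op]) (use f in \<open>auto simp: unaryF_def\<close>)
  qed
  then show ?thesis unfolding unaryF_def by simp
qed

lemma addF: "standard_conditions F \<Longrightarrow> unaryF F f \<Longrightarrow> unaryF F g \<Longrightarrow> unaryF F (\<lambda>x. f x + g x)"
  by (rule comp2[where p="(+)"]) (auto simp: standard_conditions_def)
lemma mulF: "standard_conditions F \<Longrightarrow> unaryF F f \<Longrightarrow> unaryF F g \<Longrightarrow> unaryF F (\<lambda>x. f x * g x)"
  by (rule comp2[where p="(*)"]) (auto simp: standard_conditions_def)
lemma subF: "standard_conditions F \<Longrightarrow> unaryF F f \<Longrightarrow> unaryF F g \<Longrightarrow> unaryF F (\<lambda>x. f x - g x)"
  by (rule comp2[where p="(-)"]) (auto simp: standard_conditions_def)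
lemma sucF: "standard_conditions F \<Longrightarrow> unaryF F f \<Longrightarrow> unaryF F (\<lambda>x. f x + 1)"
  by (rule comp1[where p="\<lambda>x. x + 1"]) (auto simp: standard_conditions_def)
lemma zeroF: "standard_conditions F \<Longrightarrow> unaryF F (\<lambda>x. 0)"
  by (auto simp: standard_conditions_def unaryF_def)
lemma oneF: "standard_conditions F \<Longrightarrow> unaryF F (\<lambda>x. 1)"
  using sucF[OF _ zeroF] by simp

theorem mainTheorem10:
  fixes F :: "nat \<Rightarrow> (nat list \<Rightarrow> nat) set" and A :: "nat \<Rightarrow> rat"
  assumes "standard_conditions F"
    and "F_sequence F A"
    and "\<forall>x. A x \<noteq> 0"
  shows "F_sequence F (\<lambda>x. 1 / A x)"
proof -
  note sc = assms(1)
  obtain f g h where f: "unaryF F f" and g: "unaryF F g" and h: "unaryF F h"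
    and A: "\<forall>x. A x = (of_nat (f x) - of_nat (g x)) / (of_nat (h x) + 1)"
    using assms(2) unfolding F_sequence_def by blast
  define p where "p x = 1 - (1 - (f x - g x))" for x
  define q where "q x = 1 - p x" for x
  define d where "d x = (f x - g x) + (g x - f x)" for x
  have up: "unaryF F p" unfolding p_def using f g sc
    by (intro subF oneF) auto
  have uq: "unaryF F q" unfolding q_def using up sc by (intro subF oneF) auto
  have ud: "unaryF F (\<lambda>x. d x - 1)" unfolding d_def using f g sc by (intro subF addF oneF) auto
  have uh1: "unaryF F (\<lambda>x. h x + 1)" using sucF[OF sc h] .
  have u1: "unaryF F (\<lambda>x. (h x + 1) * p x)" by (rule mulF[OF sc uh1 up])
  have u2: "unaryF F (\<lambda>x. (h x + 1) * q x)" by (rule mulF[OF sc uh1 uq])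
  have eq: "1 / A x = (of_nat ((h x + 1) * p x) - of_nat ((h x + 1) * q x)) / (of_nat (d x - 1) + 1)" for x
  proof -
    have ne: "f x \<noteq> g x" using assms(3) A by (metis diff_self div_0)
    show ?thesis
    proof (cases "f x > g x")
      case True
      then have "p x = 1" "q x = 0" "d x = f x - g x" unfolding p_def q_def d_def by auto
      then show ?thesis using True A by (simp add: of_nat_diff)
    next
      case False
      then have "p x = 0" "q x = 1" "d x = g x - f x" "g x > f x" using ne unfolding p_def q_def d_def by auto
      moreover have "A x = (of_nat (f x) - of_nat (g x)) / (of_nat (h x) + 1)" using A by blast
      moreover have "A x \<noteq> 0" using assms(3) by blast
      ultimately show ?thesis by (simp add: of_nat_diff divide_simps) (simp add: algebra_simps)
    qed
  qed
  show ?thesis unfolding F_sequence_def using u1 u2 ud eq by blast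
qed

end
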